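(* Let $R$ be an arbitrary unital associative ring and let $$ A=\left(\begin{array}{ccc} 1&1&1\\ 1&a&b\\ 1&c&d \end{array}\right)\in M_3(R) \quad \text{and}\quad B=\left(\begin{array}{cc} a-1&b-1\\ c-1&d-1 \end{array}\right)\in M_2(R). $$ Then $A$ is invertible if and only if $B$ is invertible. Moreover, if $B$ is invertible and $$ B^{-1}=\left(\begin{array}{cc} s&t\\ u&v \end{array}\right), $$ then the inverse of $A$ is given by the formula $$ A^{-1}=\left(\begin{array}{ccc} 1+s+t+u+v&-s-u&-t-v\\ -s-t&s&t\\ -u-v&u&v \end{array}\right). $$ Furthermore, if $a-1$, $b-1$, $c-1$ and $d-1$ are invertible, then $s$, $t$, $u$ and $v$ are given by $$ \begin{array}{ll} s=((a-1)-(b-1)(d-1)^{-1}(c-1))^{-1},&\ \ \ t=((c-1)-(d-1)(b-1)^{-1}(a-1))^{-1}, \\ u=((b-1)-(a-1)(c-1)^{-1}(d-1))^{-1},&\ \ \ v=((d-1)-(c-1)(a-1)^{-1}(b-1))^{-1} \end{array} $$ (thus providing an explicit expression of $A^{-1}$ in terms of $a$, $b$, $c$ and $d$).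
   Context: $R$ is an arbitrary unital associative ring, $M_n(R)$ denotes $n\times n$ matrices over $R$. The matrix $A$ is a $3\times 3$ matrix whose first row and first column consist of $1$'s (i.e. $A$ lies in the set of $3\times 3$ matrices with all entries of the first row and first column equal to $1$). *)

theory Defs
  imports "HOL-Analysis.Analysis"
begin

definition ring_invertible :: "'a::ring_1 \<Rightarrow> bool" where
  "ring_invertible x \<longleftrightarrow> (\<exists>y. x * y = 1 \<and> y * x = 1)"

definition ring_inv :: "'a::ring_1 \<Rightarrow> 'a" where
  "ring_inv x = (THE y. x * y = 1 \<and> y * x = 1)"

definition matA :: "'a::ring_1 \<Rightarrow> 'a \<Rightarrow> 'a \<Rightarrow> 'a \<Rightarrow> 'a^3^3" where
  "matA a b c d = vector [vector [1, 1, 1], vector [1, a, b], vector [1, c, d]]"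

definition matB :: "'a::ring_1 \<Rightarrow> 'a \<Rightarrow> 'a \<Rightarrow> 'a \<Rightarrow> 'a^2^2" where
  "matB a b c d = vector [vector [a - 1, b - 1], vector [c - 1, d - 1]]"

end

theory Submission imports Defs begin

lemma coreA:
  fixes p q r w s t u v :: "'a::ring_1"
  assumes e1: "p * s + q * u = 1" and e2: "p * t + q * v = 0"
    and e3: "r * s + w * u = 0" and e4: "r * t + w * v = 1"
    and f1: "s * p + t * r = 1" and f2: "s * q + t * w = 0"
    and f3: "u * p + v * r = 0" and f4: "u * q + v * w = 1"
  defines "X \<equiv> vector [vector [1 + s + t + u + v, - s - u, - t - v],
                      vector [- s - t, s, t],
                      vector [- u - v, u, v]] :: 'a^3^3"
  shows "matA (p+1) (q+1) (r+1) (w+1) ** X = mat 1 \<and> X ** matA (p+1) (q+1) (r+1) (w+1) = mat 1"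
  unfolding X_def matA_def
  apply (simp add: vec_eq_iff forall_3 matrix_matrix_mult_def mat_def sum_3)
  apply (simp add: algebra_simps e1 e2 e3 e4 f1 f2 f3 f4)
  done

lemma coreB:
  fixes p q r w s t u v :: "'a::ring_1"
  shows "(matB (p+1) (q+1) (r+1) (w+1) ** vector [vector [s, t], vector [u, v]] = mat 1
        \<and> vector [vector [s, t], vector [u, v]] ** matB (p+1) (q+1) (r+1) (w+1) = mat 1)
    \<longleftrightarrow> (p * s + q * u = 1 \<and> p * t + q * v = 0 \<and> r * s + w * u = 0 \<and> r * t + w * v = 1
      \<and> s * p + t * r = 1 \<and> s * q + t * w = 0 \<and> u * p + v * r = 0 \<and> u * q + v * w = 1)"
  unfolding matB_def
  by (simp add: vec_eq_iff forall_2 matrix_matrix_mult_def mat_def sum_2)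

lemma linL: fixes x y z p q :: "'a::ring_1"
  shows "x + y + z = \<alpha> \<Longrightarrow> x + (p+1) * y + (q+1) * z = \<beta> \<Longrightarrow> p * y + q * z = \<beta> - \<alpha>"
proof -
  assume h1: "x + y + z = \<alpha>" and h2: "x + (p+1) * y + (q+1) * z = \<beta>"
  have "p * y + q * z = (x + (p+1) * y + (q+1) * z) - (x + y + z)" by (simp add: algebra_simps)
  then show ?thesis using h1 h2 by simp
qed

lemma linR: fixes x y z p q :: "'a::ring_1"
  shows "x + y + z = \<alpha> \<Longrightarrow> x + y * (p+1) + z * (q+1) = \<beta> \<Longrightarrow> y * p + z * q = \<beta> - \<alpha>"
proof -
  assume h1: "x + y + z = \<alpha>" and h2: "x + y * (p+1) + z * (q+1) = \<beta>"
  have "y * p + z * q = (x + y * (p+1) + z * (q+1)) - (x + y + z)" by (simp add: algebra_simps)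
  then show ?thesis using h1 h2 by simp
qed

lemma convA:
  fixes p q r w :: "'a::ring_1" and Y :: "'a^3^3"
  assumes h1: "matA (p+1) (q+1) (r+1) (w+1) ** Y = mat 1"
    and h2: "Y ** matA (p+1) (q+1) (r+1) (w+1) = mat 1"
  shows "p * Y$2$2 + q * Y$3$2 = 1 \<and> p * Y$2$3 + q * Y$3$3 = 0
      \<and> r * Y$2$2 + w * Y$3$2 = 0 \<and> r * Y$2$3 + w * Y$3$3 = 1
      \<and> Y$2$2 * p + Y$2$3 * r = 1 \<and> Y$2$2 * q + Y$2$3 * w = 0
      \<and> Y$3$2 * p + Y$3$3 * r = 0 \<and> Y$3$2 * q + Y$3$3 * w = 1"
proof -
  have A: "\<And>i j. (matA (p+1) (q+1) (r+1) (w+1) ** Y) $ i $ j = mat 1 $ i $ j" using h1 by simp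
  have B: "\<And>i j. (Y ** matA (p+1) (q+1) (r+1) (w+1)) $ i $ j = mat 1 $ i $ j" using h2 by simp
  note defs = matrix_matrix_mult_def mat_def sum_3 matA_def
  have a12: "Y$1$2 + Y$2$2 + Y$3$2 = 0" using A[of 1 2] by (simp add: defs)
  have a13: "Y$1$3 + Y$2$3 + Y$3$3 = 0" using A[of 1 3] by (simp add: defs)
  have a22: "Y$1$2 + (p+1) * Y$2$2 + (q+1) * Y$3$2 = 1" using A[of 2 2] by (simp add: defs)
  have a23: "Y$1$3 + (p+1) * Y$2$3 + (q+1) * Y$3$3 = 0" using A[of 2 3] by (simp add: defs)
  have a32: "Y$1$2 + (r+1) * Y$2$2 + (w+1) * Y$3$2 = 0" using A[of 3 2] by (simp add: defs)
  have a33: "Y$1$3 + (r+1) * Y$2$3 + (w+1) * Y$3$3 = 1" using A[of 3 3] by (simp add: defs)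
  have b21: "Y$2$1 + Y$2$2 + Y$2$3 = 0" using B[of 2 1] by (simp add: defs)
  have b31: "Y$3$1 + Y$3$2 + Y$3$3 = 0" using B[of 3 1] by (simp add: defs)
  have b22: "Y$2$1 + Y$2$2 * (p+1) + Y$2$3 * (r+1) = 1" using B[of 2 2] by (simp add: defs)
  have b23: "Y$2$1 + Y$2$2 * (q+1) + Y$2$3 * (w+1) = 0" using B[of 2 3] by (simp add: defs)
  have b32: "Y$3$1 + Y$3$2 * (p+1) + Y$3$3 * (r+1) = 0" using B[of 3 2] by (simp add: defs)
  have b33: "Y$3$1 + Y$3$2 * (q+1) + Y$3$3 * (w+1) = 1" using B[of 3 3] by (simp add: defs)
  show ?thesis
    using linL[OF a12 a22] linL[OF a13 a23] linL[OF a12 a32] linL[OF a13 a33]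
      linR[OF b21 b22] linR[OF b21 b23] linR[OF b31 b32] linR[OF b31 b33]
    by simp
qed

lemma ring_inv_eq:
  fixes x y :: "'a::ring_1"
  assumes "x * y = 1" "y * x = 1"
  shows "ring_invertible x \<and> ring_inv x = y"
proof
  show "ring_invertible x" using assms unfolding ring_invertible_def by blast
  show "ring_inv x = y" unfolding ring_inv_def
  proof (rule the_equality)
    show "x * y = 1 \<and> y * x = 1" using assms by simp
    fix y' assume h: "x * y' = 1 \<and> y' * x = 1"
    have "y' = y' * (x * y)" using assms by simp
    also have "\<dots> = (y' * x) * y" by (simp add: mult.assoc)
    also have "\<dots> = y" using h by simp
    finally show "y' = y" .
  qed
qed

lemma ring_inv_props:
  fixes x :: "'a::ring_1"
  assumes "ring_invertible x"
  shows "x * ring_inv x = 1 \<and> ring_inv x * x = 1"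
proof -
  obtain y where "x * y = 1" "y * x = 1" using assms unfolding ring_invertible_def by blast
  with ring_inv_eq[OF this] show ?thesis by simp
qed

lemma schur:
  fixes p q r w s t u iw :: "'a::ring_1"
  assumes w1: "w * iw = 1" and w2: "iw * w = 1"
    and e1: "p * s + q * u = 1" and e3: "r * s + w * u = 0"
    and f1: "s * p + t * r = 1" and f2: "s * q + t * w = 0"
  shows "ring_invertible (p - q * iw * r) \<and> ring_inv (p - q * iw * r) = s"
proof -
  have "iw * (r * s + w * u) = iw * r * s + (iw * w) * u" by (simp add: distrib_left mult.assoc)
  then have "iw * r * s + u = 0" using e3 w2 by simp
  then have u: "u = - (iw * r * s)" by (simp add: eq_neg_iff_add_eq_0 add.commute)
  have "(s * q + t * w) * iw = s * q * iw + t * (w * iw)" by (simp add: distrib_right mult.assoc)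
  then have "s * q * iw + t = 0" using f2 w1 by simp
  then have t: "t = - (s * q * iw)" by (simp add: eq_neg_iff_add_eq_0 add.commute)
  have "(p - q * iw * r) * s = p * s - q * (iw * r * s)" by (simp add: left_diff_distrib mult.assoc)
  also have "\<dots> = 1" using e1 u by simp
  finally have r1: "(p - q * iw * r) * s = 1" .
  have "s * (p - q * iw * r) = s * p - (s * q * iw) * r" by (simp add: right_diff_distrib mult.assoc)
  also have "\<dots> = 1" using f1 t by simp
  finally have r2: "s * (p - q * iw * r) = 1" .
  show ?thesis using ring_inv_eq[OF r1 r2] .
qed

lemma matrix_inv_eq:
  fixes A :: "'a::semiring_1^'n^'m" and X :: "'a^'m^'n"
  assumes "A ** X = mat 1" "X ** A = mat 1"
  shows "matrix_inv A = X"
proof -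
  have ex: "\<exists>Y. A ** Y = mat 1 \<and> Y ** A = mat 1" using assms by blast
  define Y where "Y = matrix_inv A"
  have Y: "A ** Y = mat 1 \<and> Y ** A = mat 1"
    unfolding Y_def matrix_inv_def by (rule someI_ex[OF ex])
  have "X = X ** (A ** Y)" using Y by (simp add: matrix_mul_rid)
  also have "\<dots> = (X ** A) ** Y" by (simp add: matrix_mul_assoc)
  also have "\<dots> = Y" using assms by (simp add: matrix_mul_lid)
  finally show ?thesis unfolding Y_def by simp
qed

lemma mat2_eta: "(Z::'a::zero^2^2) = vector [vector [Z$1$1, Z$1$2], vector [Z$2$1, Z$2$2]]"
  by (simp add: vec_eq_iff forall_2)

lemma matrix_inv_props:
  assumes "invertible (A::'a::semiring_1^'n^'m)"
  shows "A ** matrix_inv A = mat 1 \<and> matrix_inv A ** A = mat 1"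
  using assms unfolding invertible_def matrix_inv_def by (rule someI_ex)

lemma main_p:
  fixes p q r w :: "'a::ring_1"
  shows "(invertible (matA (p+1) (q+1) (r+1) (w+1)) \<longleftrightarrow> invertible (matB (p+1) (q+1) (r+1) (w+1)))
    \<and> (invertible (matB (p+1) (q+1) (r+1) (w+1)) \<longrightarrow>
        (let s = matrix_inv (matB (p+1) (q+1) (r+1) (w+1)) $ 1 $ 1;
             t = matrix_inv (matB (p+1) (q+1) (r+1) (w+1)) $ 1 $ 2;
             u = matrix_inv (matB (p+1) (q+1) (r+1) (w+1)) $ 2 $ 1;
             v = matrix_inv (matB (p+1) (q+1) (r+1) (w+1)) $ 2 $ 2
         in matrix_inv (matA (p+1) (q+1) (r+1) (w+1)) =
              vector [vector [1 + s + t + u + v, - s - u, - t - v],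
                      vector [- s - t, s, t],
                      vector [- u - v, u, v]]
          \<and> (ring_invertible p \<and> ring_invertible q
              \<and> ring_invertible r \<and> ring_invertible w \<longrightarrow>
               ring_invertible (p - q * ring_inv w * r)
             \<and> s = ring_inv (p - q * ring_inv w * r)
             \<and> ring_invertible (r - w * ring_inv q * p)
             \<and> t = ring_inv (r - w * ring_inv q * p)
             \<and> ring_invertible (q - p * ring_inv r * w)
             \<and> u = ring_inv (q - p * ring_inv r * w)
             \<and> ring_invertible (w - r * ring_inv p * q)
             \<and> v = ring_inv (w - r * ring_inv p * q))))"
  (is "?I \<and> ?R")
proof
  let ?A = "matA (p+1) (q+1) (r+1) (w+1)" and ?B = "matB (p+1) (q+1) (r+1) (w+1)"
  show ?I
  proof
    assume "invertible ?A"
    then obtain Y where "?A ** Y = mat 1" "Y ** ?A = mat 1" unfolding invertible_def by blast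
    from convA[OF this] coreB[of p q r w "Y$2$2" "Y$2$3" "Y$3$2" "Y$3$3"]
    show "invertible ?B" unfolding invertible_def by blast
  next
    assume "invertible ?B"
    then obtain Z where Z: "?B ** Z = mat 1" "Z ** ?B = mat 1" unfolding invertible_def by blast
    then have "?B ** vector [vector [Z$1$1, Z$1$2], vector [Z$2$1, Z$2$2]] = mat 1
      \<and> vector [vector [Z$1$1, Z$1$2], vector [Z$2$1, Z$2$2]] ** ?B = mat 1"
      using mat2_eta[of Z] by simp
    then have eqs: "p * Z$1$1 + q * Z$2$1 = 1 \<and> p * Z$1$2 + q * Z$2$2 = 0 \<and> r * Z$1$1 + w * Z$2$1 = 0 \<and> r * Z$1$2 + w * Z$2$2 = 1
      \<and> Z$1$1 * p + Z$1$2 * r = 1 \<and> Z$1$1 * q + Z$1$2 * w = 0 \<and> Z$2$1 * p + Z$2$2 * r = 0 \<and> Z$2$1 * q + Z$2$2 * w = 1"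
      unfolding coreB .
    show "invertible ?A" unfolding invertible_def
      using coreA[of p "Z$1$1" q "Z$2$1" "Z$1$2" "Z$2$2" r w] eqs by blast
  qed
  show ?R
  proof
    assume "invertible ?B"
    define Z where "Z = matrix_inv ?B"
    define s where "s = Z$1$1"
    define t where "t = Z$1$2"
    define u where "u = Z$2$1"
    define v where "v = Z$2$2"
    have "?B ** Z = mat 1" "Z ** ?B = mat 1" using matrix_inv_props[OF \<open>invertible ?B\<close>] Z_def by auto
    then have "?B ** vector [vector [s, t], vector [u, v]] = mat 1
      \<and> vector [vector [s, t], vector [u, v]] ** ?B = mat 1"
      using mat2_eta[of Z] unfolding s_def t_def u_def v_def by simp
    then have eqs: "p * s + q * u = 1 \<and> p * t + q * v = 0 \<and> r * s + w * u = 0 \<and> r * t + w * v = 1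
      \<and> s * p + t * r = 1 \<and> s * q + t * w = 0 \<and> u * p + v * r = 0 \<and> u * q + v * w = 1"
      unfolding coreB .
    have XA: "matrix_inv ?A = vector [vector [1 + s + t + u + v, - s - u, - t - v],
                      vector [- s - t, s, t],
                      vector [- u - v, u, v]]"
      using coreA[of p s q u t v r w] eqs matrix_inv_eq by blast
    have SC: "ring_invertible p \<and> ring_invertible q
              \<and> ring_invertible r \<and> ring_invertible w \<longrightarrow>
               ring_invertible (p - q * ring_inv w * r)
             \<and> s = ring_inv (p - q * ring_inv w * r)
             \<and> ring_invertible (r - w * ring_inv q * p)
             \<and> t = ring_inv (r - w * ring_inv q * p)
             \<and> ring_invertible (q - p * ring_inv r * w)
             \<and> u = ring_inv (q - p * ring_inv r * w)
             \<and> ring_invertible (w - r * ring_inv p * q)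
             \<and> v = ring_inv (w - r * ring_inv p * q)"
    proof
      assume inv: "ring_invertible p \<and> ring_invertible q \<and> ring_invertible r \<and> ring_invertible w"
      have ip: "p * ring_inv p = 1" "ring_inv p * p = 1" using ring_inv_props inv by blast+
      have iq: "q * ring_inv q = 1" "ring_inv q * q = 1" using ring_inv_props inv by blast+
      have ir: "r * ring_inv r = 1" "ring_inv r * r = 1" using ring_inv_props inv by blast+
      have iw: "w * ring_inv w = 1" "ring_inv w * w = 1" using ring_inv_props inv by blast+
      have S: "ring_invertible (p - q * ring_inv w * r) \<and> ring_inv (p - q * ring_inv w * r) = s"
        by (rule schur[OF iw, of p s q u r t]) (use eqs in auto)
      have T: "ring_invertible (r - w * ring_inv q * p) \<and> ring_inv (r - w * ring_inv q * p) = t"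
        by (rule schur[OF iq, of r t w v p s]) (use eqs in \<open>auto simp: add.commute\<close>)
      have U: "ring_invertible (q - p * ring_inv r * w) \<and> ring_inv (q - p * ring_inv r * w) = u"
        by (rule schur[OF ir, of q u p s w v]) (use eqs in \<open>auto simp: add.commute\<close>)
      have V: "ring_invertible (w - r * ring_inv p * q) \<and> ring_inv (w - r * ring_inv p * q) = v"
        by (rule schur[OF ip, of w v r t q u]) (use eqs in \<open>auto simp: add.commute\<close>)
      show "ring_invertible (p - q * ring_inv w * r)
             \<and> s = ring_inv (p - q * ring_inv w * r)
             \<and> ring_invertible (r - w * ring_inv q * p)
             \<and> t = ring_inv (r - w * ring_inv q * p)
             \<and> ring_invertible (q - p * ring_inv r * w)
             \<and> u = ring_inv (q - p * ring_inv r * w)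
             \<and> ring_invertible (w - r * ring_inv p * q)
             \<and> v = ring_inv (w - r * ring_inv p * q)" using S T U V by simp
    qed
    show "let s = matrix_inv ?B $ 1 $ 1;
             t = matrix_inv ?B $ 1 $ 2;
             u = matrix_inv ?B $ 2 $ 1;
             v = matrix_inv ?B $ 2 $ 2
         in matrix_inv ?A =
              vector [vector [1 + s + t + u + v, - s - u, - t - v],
                      vector [- s - t, s, t],
                      vector [- u - v, u, v]]
          \<and> (ring_invertible p \<and> ring_invertible q
              \<and> ring_invertible r \<and> ring_invertible w \<longrightarrow>
               ring_invertible (p - q * ring_inv w * r)
             \<and> s = ring_inv (p - q * ring_inv w * r)
             \<and> ring_invertible (r - w * ring_inv q * p)
             \<and> t = ring_inv (r - w * ring_inv q * p)
             \<and> ring_invertible (q - p * ring_inv r * w)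
             \<and> u = ring_inv (q - p * ring_inv r * w)
             \<and> ring_invertible (w - r * ring_inv p * q)
             \<and> v = ring_inv (w - r * ring_inv p * q))"
      unfolding Let_def using XA SC unfolding s_def t_def u_def v_def Z_def by blast
  qed
qed

theorem lemma5:
  fixes a b c d :: "'a::ring_1"
  shows "(invertible (matA a b c d) \<longleftrightarrow> invertible (matB a b c d))
    \<and> (invertible (matB a b c d) \<longrightarrow>
        (let s = matrix_inv (matB a b c d) $ 1 $ 1;
             t = matrix_inv (matB a b c d) $ 1 $ 2;
             u = matrix_inv (matB a b c d) $ 2 $ 1;
             v = matrix_inv (matB a b c d) $ 2 $ 2
         in matrix_inv (matA a b c d) =
              vector [vector [1 + s + t + u + v, - s - u, - t - v],
                      vector [- s - t, s, t],
                      vector [- u - v, u, v]]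
          \<and> (ring_invertible (a - 1) \<and> ring_invertible (b - 1)
              \<and> ring_invertible (c - 1) \<and> ring_invertible (d - 1) \<longrightarrow>
               ring_invertible ((a - 1) - (b - 1) * ring_inv (d - 1) * (c - 1))
             \<and> s = ring_inv ((a - 1) - (b - 1) * ring_inv (d - 1) * (c - 1))
             \<and> ring_invertible ((c - 1) - (d - 1) * ring_inv (b - 1) * (a - 1))
             \<and> t = ring_inv ((c - 1) - (d - 1) * ring_inv (b - 1) * (a - 1))
             \<and> ring_invertible ((b - 1) - (a - 1) * ring_inv (c - 1) * (d - 1))
             \<and> u = ring_inv ((b - 1) - (a - 1) * ring_inv (c - 1) * (d - 1))
             \<and> ring_invertible ((d - 1) - (c - 1) * ring_inv (a - 1) * (b - 1))
             \<and> v = ring_inv ((d - 1) - (c - 1) * ring_inv (a - 1) * (b - 1)))))"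
  using main_p[of "a - 1" "b - 1" "c - 1" "d - 1"] by simp

end
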